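(* Let $a,b,c\in\mathbb{Z}$ with $a,b$ odd, $c\equiv2\pmod4$, and $ab(a+b)c$ a nonzero perfect square. If the equation $ax^2+by^2=cz^2$ is partition regular with respect to $x,y$, then $ab\equiv1\pmod 8$.
   Context: The equation $ax^2+by^2=cz^2$ is partition regular with respect to $x,y$ if for every finite coloring of $\mathbb{N}=\{1,2,\dots\}$ there exist distinct $x,y\in\mathbb{N}$ of the same color and $z\in\mathbb{N}$ with $ax^2+by^2=cz^2$. A perfect square is $k^2$, $k\in\mathbb{Z}$. *)

theory Defs
  imports Main
begin

definition partition_regular_xy :: "int \<Rightarrow> int \<Rightarrow> int \<Rightarrow> bool" where
  "partition_regular_xy a b c \<longleftrightarrow>
     (\<forall>(r::nat) (col::nat \<Rightarrow> nat). (\<forall>n. n > 0 \<longrightarrow> col n < r) \<longrightarrow>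
        (\<exists>x y z::nat. x > 0 \<and> y > 0 \<and> z > 0 \<and> x \<noteq> y \<and> col x = col y \<and>
           a * (int x)^2 + b * (int y)^2 = c * (int z)^2))"

definition perfect_square :: "int \<Rightarrow> bool" where
  "perfect_square n \<longleftrightarrow> (\<exists>k::int. n = k^2)"

end

theory Submission
  imports Defs
begin

lemma odd_sq_mod8:
  fixes x :: int assumes "odd x" shows "x^2 mod 8 = 1"
proof -
  obtain k where k: "x = 2*k+1" using assms oddE by blast
  have "even (k*(k+1))" by simp
  then obtain m where m: "k*(k+1) = 2*m" by blast
  have "x^2 = 4*(k*(k+1)) + 1" unfolding k by (simp add: power2_eq_square algebra_simps)
  also have "\<dots> = 8*m+1" using m by simp
  finally show ?thesis by simp
qed

lemma key:
  fixes s c z :: int and n p :: nat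
  assumes "odd s" "odd c" "p \<le> 1" "2^n * s = 2^p * c * z^2"
  shows "n mod 2 = p \<and> s mod 8 = c mod 8"
  using assms
proof (induction n arbitrary: z rule: less_induct)
  case (less n)
  show ?case
  proof (cases n)
    case 0
    then have e: "s = 2^p * c * z^2" using less by simp
    have "p = 0"
    proof (rule ccontr)
      assume "p \<noteq> 0" then have "p = 1" using less by simp
      then have "even s" using e by simp
      then show False using less by simp
    qed
    then have "s = c * z^2" using e by simp
    moreover have "odd z" using \<open>s = c*z^2\<close> less by auto
    ultimately have "s mod 8 = (c * (z^2 mod 8)) mod 8" by (simp add: mod_mult_right_eq)
    then have "s mod 8 = c mod 8" using odd_sq_mod8[OF \<open>odd z\<close>] by simp
    then show ?thesis using 0 \<open>p=0\<close> by simp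
  next
    case (Suc m)
    show ?thesis
    proof (cases m)
      case 0
      then have e: "2 * s = 2^p * c * z^2" using less Suc by simp
      have "p = 1"
      proof (rule ccontr)
        assume "p \<noteq> 1" then have "p = 0" using less by simp
        then have e2: "2*s = c*z^2" using e by simp
        then have "even (c*z^2)" by (metis dvd_triv_left)
        then have "even z" using less by auto
        then obtain w where "z = 2*w" by blast
        then have "s = 2*(c*w^2)" using e2 by (simp add: power2_eq_square)
        then show False using less by simp
      qed
      then have "s = c*z^2" using e by simp
      moreover have "odd z" using \<open>s = c*z^2\<close> less by auto
      ultimately have "s mod 8 = (c * (z^2 mod 8)) mod 8" by (simp add: mod_mult_right_eq)
      then have "s mod 8 = c mod 8" using odd_sq_mod8[OF \<open>odd z\<close>] by simp
      then show ?thesis using Suc 0 \<open>p=1\<close> by simp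
    next
      case (Suc k)
      have n: "n = Suc (Suc k)" using Suc \<open>n = Suc m\<close> by simp
      have e: "4 * (2^k * s) = 2^p * c * z^2" using less(5) n by simp
      have "even z"
      proof (rule ccontr)
        assume oz: "odd z"
        show False
        proof (cases "p = 0")
          case True
          then have "c * z^2 = 2 * (2 * (2^k * s))" using e by simp
          then have "even (c*z^2)" by (metis dvd_triv_left)
          then show False using oz less by simp
        next
          case False
          then have "p = 1" using less by simp
          then have "c * z^2 = 2 * (2^k * s)" using e by (simp add: mult.commute)
          then have "even (c*z^2)" by (metis dvd_triv_left)
          then show False using oz less by simp
        qed
      qed
      then obtain w where w: "z = 2*w" by blast
      have "4 * (2^k * s) = 4 * (2^p * c * w^2)" using e w by (simp add: power2_eq_square algebra_simps)
      then have "2^k * s = 2^p * c * w^2" by simp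
      then have "k mod 2 = p \<and> s mod 8 = c mod 8" using less n by (intro less.IH) auto
      then show ?thesis using n by simp
    qed
  qed
qed

function oddpart :: "nat \<Rightarrow> nat" where
  "oddpart n = (if n = 0 \<or> odd n then n else oddpart (n div 2))"
  by auto
termination by (relation "measure id") auto

declare oddpart.simps[simp del]

lemma oddpart_prop: "n > 0 \<Longrightarrow> odd (oddpart n) \<and> (\<exists>i. n = 2^i * oddpart n)"
proof (induction n rule: oddpart.induct)
  case (1 n)
  show ?case
  proof (cases "odd n")
    case True
    then have "oddpart n = n" by (subst oddpart.simps) simp
    then show ?thesis using True by (metis power_0 mult_1)
  next
    case False
    then have e: "oddpart n = oddpart (n div 2)" using 1 by (subst oddpart.simps) simp
    have "n div 2 > 0" using False 1 by (auto elim: evenE)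
    then have "odd (oddpart (n div 2)) \<and> (\<exists>i. n div 2 = 2^i * oddpart (n div 2))"
      using 1 False by blast
    then obtain i where "n div 2 = 2^i * oddpart n" "odd (oddpart n)" using e by auto
    moreover have "n = 2 * (n div 2)" using False by simp
    ultimately have "n = 2^(Suc i) * oddpart n" by simp
    then show ?thesis using \<open>odd (oddpart n)\<close> by blast
  qed
qed

lemma neq_case:
  fixes A B C Z X Y :: int and i j :: nat
  assumes "odd A" "odd X" "odd C" "i < j"
    and "A*(2^i*X)^2 + B*(2^j*Y)^2 = 2*C*Z^2"
  shows False
proof -
  obtain d where d: "j = i + Suc d" using assms(4) less_iff_Suc_add by auto
  define P :: int where "P = 2^i"
  define Q :: int where "Q = 2^(Suc d)"
  have j: "(2::int)^j = P*Q" unfolding P_def Q_def d by (simp only: power_add)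
  have "even Q" unfolding Q_def by simp
  define s where "s = A*X^2 + Q*Q*B*Y^2"
  have "odd (A*X^2)" using assms by simp
  moreover have "even (Q*Q*B*Y^2)" using \<open>even Q\<close> by simp
  ultimately have "odd s" unfolding s_def by simp
  have PP: "P*P = 2^(2*i)" unfolding P_def by (simp only: mult_2 power_add)
  have "A*(P*X)^2 + B*(P*Q*Y)^2 = (P*P)*s" unfolding s_def by (simp add: power2_eq_square algebra_simps)
  then have "2^(2*i) * s = 2^1 * C * Z^2" using assms(5) j PP by (simp add: P_def)
  from key[OF \<open>odd s\<close> \<open>odd C\<close> _ this] show False by simp
qed

theorem propositionP:
  fixes a b c :: int
  assumes "odd a" and "odd b" and "c mod 4 = 2"
    and "a * b * (a + b) * c \<noteq> 0"
    and "perfect_square (a * b * (a + b) * c)"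
    and "partition_regular_xy a b c"
  shows "a * b mod 8 = 1"
proof -
  have abne: "a + b \<noteq> 0" using assms(4) by auto
  define N where "N = nat \<bar>a+b\<bar>"
  have "N > 0" using abne N_def by simp
  from oddpart_prop[OF this] obtain E where NE: "N = 2^E * oddpart N" and oN: "odd (oddpart N)" by blast
  define u where "u = sgn (a+b) * int (oddpart N)"
  have ou: "odd u" using oN abne unfolding u_def by (auto simp: sgn_if)
  have abE: "a + b = 2^E * u"
  proof -
    have "\<bar>a+b\<bar> = int N" using N_def by simp
    also have "\<dots> = 2^E * int (oddpart N)" using NE by (metis of_nat_mult of_nat_numeral of_nat_power)
    finally show ?thesis unfolding u_def by (metis abs_sgn mult.left_commute sgn_mult_abs)
  qed
  obtain q where "c = 4*q + 2" using assms(3) by (metis mod_div_mult_eq add.commute mult.commute)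
  define c' where "c' = 2*q+1"
  have cc: "c = 2*c'" "odd c'" using \<open>c = 4*q+2\<close> c'_def by auto
  define M where "M = E + 3"
  define col where "col = (\<lambda>n. oddpart n mod 2^M)"
  have H: "\<forall>n. n > 0 \<longrightarrow> col n < 2^M" unfolding col_def by simp
  note assms(6)[unfolded partition_regular_xy_def, THEN spec[of _ "2^M"], THEN spec[of _ col], THEN mp, OF H]
  then
  obtain x y z :: nat where xyz0: "0 < x \<and> 0 < y \<and> 0 < z \<and> x \<noteq> y \<and> col x = col y \<and>
      a * (int x)^2 + b * (int y)^2 = c * (int z)^2"
    by (elim exE)
  then have xyz: "x > 0" "y > 0" "z > 0" "col x = col y"
      "a * (int x)^2 + b * (int y)^2 = c * (int z)^2" by auto
  obtain i where xi: "x = 2^i * oddpart x" and ox: "odd (oddpart x)" using oddpart_prop[OF \<open>x>0\<close>] by blast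
  obtain j where yj: "y = 2^j * oddpart y" and oy: "odd (oddpart y)" using oddpart_prop[OF \<open>y>0\<close>] by blast
  define X where "X = int (oddpart x)"
  define Y where "Y = int (oddpart y)"
  define Z where "Z = int z"
  have oX: "odd X" using ox X_def by simp
  have oY: "odd Y" using oy Y_def by simp
  have ix: "int x = 2^i*X" unfolding X_def using arg_cong[of _ _ int, OF xi] by simp
  have iy: "int y = 2^j*Y" unfolding Y_def using arg_cong[of _ _ int, OF yj] by simp
  have eq: "a*(2^i*X)^2 + b*(2^j*Y)^2 = 2*c'*Z^2"
    using xyz(5) cc(1) unfolding Z_def ix[symmetric] iy[symmetric] by simp
  have "i = j"
  proof (rule ccontr)
    assume "i \<noteq> j"
    then consider "i < j" | "j < i" by linarith
    then show False
    proof cases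
      case 1 then show False using neq_case[OF \<open>odd a\<close> oX cc(2) 1 eq] by blast
    next
      case 2
      have "b*(2^j*Y)^2 + a*(2^i*X)^2 = 2*c'*Z^2" using eq by simp
      then show False using neq_case[OF \<open>odd b\<close> oY cc(2) 2] by blast
    qed
  qed
  have "X mod 2^M = Y mod 2^M"
    using xyz(4) unfolding col_def X_def Y_def by (metis of_nat_numeral of_nat_power zmod_int)
  then have "2^M dvd Y - X" by (metis mod_eq_dvd_iff)
  then obtain t where t: "Y = X + 2^M * t" by (metis add.commute diff_add_cancel dvd_def)
  define F :: int where "F = 2^E"
  have F8: "(2::int)^M = F * 8" unfolding F_def M_def by (simp add: power_add)
  define s where "s = u*X^2 + 16*b*(t*X + F*4*t^2)"
  have absE: "a*X^2 + b*Y^2 = F*s"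
  proof -
    have "a*X^2 + b*Y^2 = (a+b)*X^2 + b*(2*X*(F*8*t) + (F*8*t)^2)"
      unfolding t F8 by (simp add: power2_eq_square algebra_simps)
    also have "\<dots> = F*s" unfolding abE s_def F_def[symmetric]
      by (simp add: power2_eq_square algebra_simps)
    finally show ?thesis .
  qed
  have smod: "s mod 8 = u mod 8"
  proof -
    define W where "W = 2*b*(t*X + F*4*t^2)"
    have "s = u*X^2 + W*8" unfolding s_def W_def by simp
    then have "s mod 8 = (u*X^2) mod 8" by (simp only: mod_mult_self1)
    also have "\<dots> = (u * (X^2 mod 8)) mod 8" by (simp add: mod_mult_right_eq)
    also have "\<dots> = u mod 8" using odd_sq_mod8[OF oX] by simp
    finally show ?thesis .
  qed
  have os: "odd s" unfolding s_def using ou oX by simp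
  define G :: int where "G = 2^i"
  have "a*(G*X)^2 + b*(G*Y)^2 = 2*c'*Z^2" using eq \<open>i=j\<close> unfolding G_def by simp
  moreover have "a*(G*X)^2 + b*(G*Y)^2 = (G*G)*(a*X^2 + b*Y^2)" by (simp add: power2_eq_square algebra_simps)
  ultimately have "G*G*F*s = 2^1 * c' * Z^2" using absE by (simp add: mult.assoc)
  moreover have "G*G*F = 2^(2*i+E)" unfolding G_def F_def by (simp only: mult_2 power_add)
  ultimately
  have "2^(2*i+E) * s = 2^1 * c' * Z^2" by simp
  from key[OF os cc(2) _ this] have sc: "s mod 8 = c' mod 8" by simp
  obtain k where k: "a * b * (a + b) * c = k^2" using assms(5) unfolding perfect_square_def by blast
  have "a * b * (a + b) * c = 2^(E+1) * (a*b*u*c')" unfolding abE cc(1) by (simp add: algebra_simps)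
  then have "2^(E+1) * (a*b*u*c') = 2^0 * 1 * k^2" using k by simp
  moreover have "odd (a*b*u*c')" using assms(1,2) ou cc(2) by simp
  ultimately have "(a*b*u*c') mod 8 = 1 mod 8" using key[of "a*b*u*c'" 1 0 "E+1" k] by simp
  have "(a*b*c'*c') mod 8 = (a*b*c'*(c' mod 8)) mod 8" by (simp add: mod_mult_right_eq)
  also have "\<dots> = (a*b*c'*(u mod 8)) mod 8" using smod sc by simp
  also have "\<dots> = (a*b*c'*u) mod 8" by (simp add: mod_mult_right_eq)
  also have "\<dots> = (a*b*u*c') mod 8" by (simp add: ac_simps)
  finally have A: "(a*b*c'*c') mod 8 = 1" using \<open>(a*b*u*c') mod 8 = 1 mod 8\<close> by simp
  have C: "(c'*c') mod 8 = 1" using odd_sq_mod8[OF cc(2)] by (simp add: power2_eq_square)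
  have "(a*b) mod 8 = (a*b*((c'*c') mod 8)) mod 8" using C by simp
  also have "\<dots> = (a*b*(c'*c')) mod 8" by (simp add: mod_mult_right_eq)
  also have "\<dots> = 1" using A by (simp add: mult.assoc)
  finally show ?thesis .
qed
end
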